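(* Let $B>1$ and $k>0$. There is a number $c>0$ (depending on $B$ and $k$) such that the following holds. Let $\Omega\subset\mathbb R^d$ be compact, $\mu$ a probability measure on $\Omega$, and $X_N$ an $N$-dimensional subspace of $\mathcal C(\Omega)$ such that for every $q\in[2,\infty)$ one has $\|f\|_\infty\le BN^{k/q}\|f\|_q$ for all $f\in X_N$. Then for every integer $m\ge\frac{c}{[\log B]^2}N^{k+2}[\log N]^2$ there are $m$ points $\xi^1,\dots,\xi^m\in\Omega$ such that $$ \|f\|_\infty\le2B^{k+1}\max_{1\le j\le m}|f(\xi^j)|\qquad\forall f\in X_N. $$
   Context: $\|f\|_q=(\int_\Omega|f|^qd\mu)^{1/q}$ and $\|f\|_\infty=\max_{\mathbf x\in\Omega}|f(\mathbf x)|$. *)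

theory Defs
  imports "HOL-Analysis.Analysis" "HOL-Probability.Probability" "HOL-Library.Function_Algebras"
begin

text \<open>Pointwise scalar multiplication of real-valued functions; with the pointwise
  addition from Function_Algebras this makes functions a real vector space.\<close>
definition fun_scale :: "real \<Rightarrow> ('a \<Rightarrow> real) \<Rightarrow> 'a \<Rightarrow> real" where
  "fun_scale c f = (\<lambda>x. c * f x)"

text \<open>Points of R^d, realised as real sequences vanishing from index d on.\<close>
definition Rd :: "nat \<Rightarrow> (nat \<Rightarrow> real) set" where
  "Rd d = {x. \<forall>i\<ge>d. x i = 0}"

definition Lq_norm :: "'a measure \<Rightarrow> real \<Rightarrow> ('a \<Rightarrow> real) \<Rightarrow> real" where
  "Lq_norm \<mu> q f = (\<integral>x. \<bar>f x\<bar> powr q \<partial>\<mu>) powr (1 / q)"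

definition sup_norm :: "'a set \<Rightarrow> ('a \<Rightarrow> real) \<Rightarrow> real" where
  "sup_norm \<Omega> f = Sup ((\<lambda>x. \<bar>f x\<bar>) ` \<Omega>)"

end

theory Submission
  imports Defs
begin



definition C1 :: "real \<Rightarrow> real \<Rightarrow> real" where
  "C1 B k = (ln 20 + (k+2)*ln B)/ln 2 + 1 + k/2"
definition D0 :: "real \<Rightarrow> real \<Rightarrow> real" where
  "D0 B k = exp(-2*ln B - ln 2/k)/2"
definition cst :: "real \<Rightarrow> real \<Rightarrow> real" where
  "cst B k = 2 * C1 B k * (ln B)^2 / (D0 B k * ln 2)"

lemma cst_pos: "B > 1 \<Longrightarrow> k > 0 \<Longrightarrow> cst B k > 0"
  unfolding cst_def C1_def D0_def by (auto intro!: divide_pos_pos mult_pos_pos add_pos_nonneg)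

lemma tq_ok:
  fixes B k :: real and N :: nat
  assumes B: "B > 1" and k: "k > 0" and N: "N \<ge> 2"
  defines "q \<equiv> 2 + ln (real N)/ln B + ln 2/(k*ln B)"
  shows "(B powr (-(k+1))) powr q \<le> B powr (-q) * real N powr (-k) / 2"
proof -
  define L where "L = ln B"
  define lN where "lN = ln (real N)"
  have L: "L > 0" using B L_def by simp
  have N0: "real N > 0" using N by simp
  have kq: "k * L * q = 2*k*L + k*lN + ln 2" unfolding q_def L_def[symmetric] lN_def[symmetric]
    using L k by (simp add: field_simps)
  have "(B powr (-(k+1))) powr q = exp (-(k+1)*q*L)"
    using B by (simp add: powr_powr powr_def L_def)
  also have "\<dots> \<le> exp (-q*L - k*lN - ln 2)"
    using kq L k by (intro exp_le_cancel_iff[THEN iffD2]) (simp add: algebra_simps)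
  also have "\<dots> = exp ((-q*L) + (-k*lN) - ln 2)" by (rule arg_cong[where f=exp]) simp
  also have "\<dots> = exp (-q*L) * exp (-k*lN) / exp (ln 2)" by (simp only: exp_diff exp_add)
  also have "\<dots> = B powr (-q) * real N powr (-k) / 2"
  proof -
    have "B powr (-q) = exp (-q*L)" using B by (simp add: powr_def L_def)
    moreover have "real N powr (-k) = exp (-k*lN)" using N0 by (simp add: powr_def lN_def)
    ultimately show ?thesis by simp
  qed
  finally show ?thesis .
qed

lemma arith_main:
  fixes B k :: real and N m :: nat
  assumes B: "B > 1" and k: "k > 0" and N: "N \<ge> 2"
    and m: "real m \<ge> cst B k / (ln B)^2 * real N powr (k+2) * (ln (real N))^2"
  defines "\<delta> \<equiv> (B powr (-(k+1)) / 4) / (real N * (B * real N powr (k/2)))"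
    and "q \<equiv> 2 + ln (real N)/ln B + ln 2/(k*ln B)"
  defines "p \<equiv> B powr (-q) * real N powr (-k) / 2"
  shows "(2/\<delta> + 3) ^ N * (1-p)^m < 1"
proof -
  define L where "L = ln B"
  define lN where "lN = ln (real N)"
  have L: "L > 0" using B L_def by simp
  have N0: "real N > 0" using N by simp
  have lN: "lN \<ge> ln 2" unfolding lN_def using N by simp
  have lNp: "lN > 0" using lN ln_gt_zero[of 2] by linarith
  have BL: "B = exp L" using B L_def by simp
  have NL: "real N = exp lN" using N0 lN_def by simp
  have dpos: "\<delta> > 0" unfolding \<delta>_def using B N0 by simp
  have "\<delta> = (exp (-(k+1)*L) / 4) / (exp lN * (exp L * exp (k/2*lN)))"
  proof -
    have "B powr (-(k+1)) = exp (-(k+1)*L)" using B by (simp add: powr_def L_def)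
    moreover have "real N powr (k/2) = exp (k/2*lN)" using N0 by (simp add: powr_def lN_def)
    ultimately show ?thesis unfolding \<delta>_def using BL NL by simp
  qed
  then have "1/\<delta> = 4 * (exp lN * exp L * exp (k/2*lN) / exp (-(k+1)*L))"
    using dpos by (simp add: field_simps)
  also have "exp lN * exp L * exp (k/2*lN) / exp (-(k+1)*L) = exp (lN + L + k/2*lN - (-(k+1)*L))"
    by (simp only: exp_diff exp_add)
  also have "lN + L + k/2*lN - (-(k+1)*L) = (k+2)*L + (1+k/2)*lN" by (simp add: algebra_simps)
  finally have dinv: "1/\<delta> = 4 * exp ((k+2)*L + (1+k/2)*lN)" .
  have E0: "(k+2)*L + (1+k/2)*lN \<ge> 0" using L lNp k by simp
  have d1: "1/\<delta> \<ge> 1" unfolding dinv using one_le_exp_iff[THEN iffD2, OF E0] by linarith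
  have b1: "2/\<delta> + 3 \<le> 5/\<delta>"
  proof -
    have "3 \<le> 3 * (1/\<delta>)" using d1 by linarith
    moreover have "5/\<delta> = 2/\<delta> + 3 * (1/\<delta>)" by (simp add: add_divide_distrib[symmetric])
    ultimately show ?thesis by linarith
  qed
  have "5/\<delta> = 5 * (1/\<delta>)" by simp
  then have "5/\<delta> = 20 * exp ((k+2)*L + (1+k/2)*lN)" unfolding dinv by simp
  then have l5: "ln (5/\<delta>) = ln 20 + ((k+2)*L + (1+k/2)*lN)" by (simp add: ln_mult)
  have A0: "ln 20 + (k+2)*L \<ge> 0" using L k by simp
  have ln2: "ln (2::real) > 0" by simp
  have "(ln 20 + (k+2)*L) * 1 \<le> (ln 20 + (k+2)*L) * (lN / ln 2)"
    using A0 lN ln2 by (intro mult_left_mono) (auto simp: divide_simps)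
  then have l5b: "ln (5/\<delta>) \<le> C1 B k * lN"
    unfolding l5 C1_def L_def[symmetric] by (simp add: algebra_simps add_divide_distrib)
  have "(ln 20 + (k+2)*ln B)/ln 2 \<ge> 0" using A0 L_def by simp
  then have C1p: "C1 B k > 0" unfolding C1_def using k by linarith
  have "(2/\<delta> + 3) ^ N \<le> (5/\<delta>) ^ N" using b1 dpos by (intro power_mono) auto
  also have "(5/\<delta>) ^ N = exp (real N * ln (5/\<delta>))" using dpos by (simp add: exp_of_nat_mult)
  also have "\<dots> \<le> exp (real N * (C1 B k * lN))" using l5b by (simp add: mult_left_mono)
  finally have P1: "(2/\<delta> + 3) ^ N \<le> exp (real N * (C1 B k * lN))" .
  have qL: "q * L = 2*L + lN + ln 2/k" unfolding q_def L_def[symmetric] lN_def[symmetric]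
    using L k by (simp add: field_simps)
  have "p = exp (-q*L) * exp (-k*lN) / 2"
  proof -
    have "B powr (-q) = exp (-q*L)" using B by (simp add: powr_def L_def)
    moreover have "real N powr (-k) = exp (-k*lN)" using N0 by (simp add: powr_def lN_def)
    ultimately show ?thesis unfolding p_def by simp
  qed
  also have "exp (-q*L) * exp (-k*lN) = exp (-2*L - ln 2/k) * exp (-(k+1)*lN)"
    unfolding exp_add[symmetric] using qL by (intro arg_cong[where f=exp]) (simp add: algebra_simps)
  finally have pD: "p = D0 B k * exp (-(k+1)*lN)" unfolding D0_def L_def by simp
  have ppos: "p > 0" unfolding pD D0_def by simp
  have ple: "p \<le> 1"
  proof -
    have "ln 2 / k \<ge> 0" using k by simp
    then have "exp (-2*L - ln 2/k) \<le> 1" using L by simp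
    moreover have "exp (-(k+1)*lN) \<le> 1"
    proof -
      have "(k+1)*lN \<ge> 0" using lNp k by simp
      then have "-(k+1)*lN \<le> 0" by linarith
      then show ?thesis by simp
    qed
    ultimately show ?thesis unfolding pD D0_def L_def[symmetric] using mult_le_one[of "exp (-2*L - ln 2/k)" "exp (-(k+1)*lN)"] by simp
  qed
  have "(1-p)^m \<le> exp (-p) ^ m" using ple exp_ge_add_one_self[of "-p"] by (intro power_mono) auto
  also have "\<dots> = exp (-(p * real m))" by (simp add: exp_of_nat_mult[symmetric] mult.commute)
  finally have P2: "(1-p)^m \<le> exp (-(p * real m))" .
  have NP: "real N powr (k+2) = exp ((k+2)*lN)" using N0 by (simp add: powr_def lN_def)
  have D0p: "D0 B k > 0" unfolding D0_def by simp
  have "p * real m \<ge> p * (cst B k / L^2 * exp ((k+2)*lN) * lN^2)"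
    using m ppos unfolding NP L_def lN_def by (intro mult_left_mono) auto
  also have "p * (cst B k / L^2 * exp ((k+2)*lN) * lN^2) = 2 * C1 B k / ln 2 * (exp (-(k+1)*lN) * exp ((k+2)*lN)) * lN^2"
    unfolding pD cst_def L_def[symmetric] using D0p L by (simp add: field_simps)
  also have "exp (-(k+1)*lN) * exp ((k+2)*lN) = real N"
    unfolding exp_add[symmetric] NL by (intro arg_cong[where f=exp]) (simp add: algebra_simps)
  finally have pm: "p * real m \<ge> 2 * C1 B k / ln 2 * real N * lN^2" .
  have "lN * ln 2 \<le> lN * lN" using lN lNp by (intro mult_left_mono) auto
  then have "lN^2 / ln 2 \<ge> lN" using ln2 by (simp add: power2_eq_square divide_simps)
  then have "2 * C1 B k / ln 2 * real N * lN^2 \<ge> 2 * C1 B k * real N * lN"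
    using C1p N0 by (simp add: field_simps mult_left_mono)
  with pm have pm2: "p * real m \<ge> 2 * C1 B k * real N * lN" by linarith
  have "(2/\<delta> + 3) ^ N * (1-p)^m \<le> exp (real N * (C1 B k * lN)) * exp (-(p * real m))"
    using P1 P2 ple by (intro mult_mono) auto
  also have "\<dots> = exp (real N * (C1 B k * lN) - p * real m)" by (simp add: exp_diff exp_minus field_simps)
  also have "\<dots> < 1"
  proof -
    have "real N * (C1 B k * lN) > 0" using N0 C1p lNp by simp
    then have "real N * (C1 B k * lN) - p * real m < 0" using pm2 by (simp add: algebra_simps)
    then show ?thesis by simp
  qed
  finally show ?thesis .
qed

interpretation fs: vector_space fun_scale
  by unfold_locales (auto simp: fun_scale_def fun_eq_iff algebra_simps)

lemma sum_fun_app: "(sum F A) x = (\<Sum>i\<in>A. F i x)" for F :: "_ \<Rightarrow> _ \<Rightarrow> real"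
  by (induct A rule: infinite_finite_induct) auto

lemma fun_scale_app[simp]: "fun_scale c f x = c * f x"
  by (simp add: fun_scale_def)

locale setting =
  fixes \<Omega> :: "(nat \<Rightarrow> real) set" and \<mu> :: "(nat \<Rightarrow> real) measure"
    and X :: "((nat \<Rightarrow> real) \<Rightarrow> real) set"
  assumes cpt: "compact \<Omega>" and ps: "prob_space \<mu>" and sp: "space \<mu> = \<Omega>"
    and sets: "sets \<mu> = sets (restrict_space borel \<Omega>)"
    and Xc: "X \<subseteq> {f. continuous_on \<Omega> f \<and> (\<forall>x. x \<notin> \<Omega> \<longrightarrow> f x = 0)}"
    and sub: "Modules.module.subspace fun_scale X"
  fixes N :: nat and Bc k :: real
  assumes Bc: "Bc > 1" and kpos: "k > 0"
    and nik: "\<forall>q\<ge>2. \<forall>f\<in>X. sup_norm \<Omega> f \<le> Bc * real N powr (k / q) * Lq_norm \<mu> q f"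
begin

lemma ne: "\<Omega> \<noteq> {}"
  using ps sp prob_space.not_empty by blast

lemma meas: "continuous_on \<Omega> h \<Longrightarrow> h \<in> borel_measurable \<mu>" for h :: "(nat \<Rightarrow> real) \<Rightarrow> real"
  using borel_measurable_continuous_on_restrict measurable_cong_sets sets by blast

lemma bnd: "continuous_on \<Omega> h \<Longrightarrow> \<exists>C. \<forall>x\<in>\<Omega>. \<bar>h x\<bar> \<le> C" for h :: "(nat \<Rightarrow> real) \<Rightarrow> real"
  using compact_imp_bounded[OF compact_continuous_image[OF _ cpt]]
  by (metis bounded_iff image_eqI real_norm_def)

lemma intg: "continuous_on \<Omega> h \<Longrightarrow> integrable \<mu> h" for h :: "(nat \<Rightarrow> real) \<Rightarrow> real"
proof -
  assume c: "continuous_on \<Omega> h"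
  then obtain C where C: "\<forall>x\<in>\<Omega>. \<bar>h x\<bar> \<le> C" using bnd by blast
  show ?thesis
    apply (rule finite_measure.integrable_const_bound[where B=C])
    using ps prob_space_def apply blast
    using C sp apply (auto intro!: AE_I2)[1]
    using meas[OF c] .
qed

lemma maxpt: "continuous_on \<Omega> h \<Longrightarrow> \<exists>x\<in>\<Omega>. \<forall>y\<in>\<Omega>. \<bar>h y\<bar> \<le> \<bar>h x\<bar>" for h :: "(nat \<Rightarrow> real) \<Rightarrow> real"
proof -
  assume c: "continuous_on \<Omega> h"
  have "continuous_on \<Omega> (\<lambda>x. \<bar>h x\<bar>)" using c by (intro continuous_intros)
  from continuous_attains_sup[OF cpt ne this] show ?thesis .
qed

lemma supn_eq: "x \<in> \<Omega> \<Longrightarrow> \<forall>y\<in>\<Omega>. \<bar>h y\<bar> \<le> \<bar>h x\<bar> \<Longrightarrow> sup_norm \<Omega> h = \<bar>h x\<bar>" for h :: "(nat \<Rightarrow> real) \<Rightarrow> real"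
  unfolding sup_norm_def by (rule cSup_eq_maximum) auto

lemma supn_ge: "continuous_on \<Omega> h \<Longrightarrow> y \<in> \<Omega> \<Longrightarrow> \<bar>h y\<bar> \<le> sup_norm \<Omega> h" for h :: "(nat \<Rightarrow> real) \<Rightarrow> real"
  using maxpt supn_eq by fastforce

lemma supn_attn: "continuous_on \<Omega> h \<Longrightarrow> \<exists>x\<in>\<Omega>. sup_norm \<Omega> h = \<bar>h x\<bar>" for h :: "(nat \<Rightarrow> real) \<Rightarrow> real"
  using maxpt supn_eq by blast

lemma supn_nonneg: "continuous_on \<Omega> h \<Longrightarrow> 0 \<le> sup_norm \<Omega> h" for h :: "(nat \<Rightarrow> real) \<Rightarrow> real"
  using supn_attn by fastforce

lemma Xcont: "f \<in> X \<Longrightarrow> continuous_on \<Omega> f" using Xc by auto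
lemma Xzero: "f \<in> X \<Longrightarrow> x \<notin> \<Omega> \<Longrightarrow> f x = 0" using Xc by auto

lemma Xsum: "(\<And>i. i \<in> I \<Longrightarrow> f i \<in> X) \<Longrightarrow> sum f I \<in> X"
  using fs.subspace_sum sub by blast
lemma Xscale: "f \<in> X \<Longrightarrow> fun_scale c f \<in> X"
  using fs.subspace_scale sub by blast
lemma Xdiff: "f \<in> X \<Longrightarrow> g \<in> X \<Longrightarrow> f - g \<in> X"
  using fs.subspace_diff sub by blast
lemma Xadd: "f \<in> X \<Longrightarrow> g \<in> X \<Longrightarrow> f + g \<in> X"
  using fs.subspace_add sub by blast


definition ip :: "((nat \<Rightarrow> real) \<Rightarrow> real) \<Rightarrow> ((nat \<Rightarrow> real) \<Rightarrow> real) \<Rightarrow> real" where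
  "ip f g = (\<integral>x. f x * g x \<partial>\<mu>)"

lemma ip_sym: "ip f g = ip g f" unfolding ip_def by (simp add: mult.commute)

lemma ip_sum_left:
  assumes "\<And>i. i \<in> I \<Longrightarrow> continuous_on \<Omega> (g i)" "continuous_on \<Omega> h"
  shows "ip (\<Sum>i\<in>I. fun_scale (c i) (g i)) h = (\<Sum>i\<in>I. c i * ip (g i) h)"
proof -
  have "ip (\<Sum>i\<in>I. fun_scale (c i) (g i)) h = (\<integral>x. (\<Sum>i\<in>I. c i * (g i x * h x)) \<partial>\<mu>)"
    unfolding ip_def by (simp add: sum_fun_app sum_distrib_right mult.assoc)
  also have "\<dots> = (\<Sum>i\<in>I. (\<integral>x. c i * (g i x * h x) \<partial>\<mu>))"
    by (rule Bochner_Integration.integral_sum[where I=I and f="\<lambda>i x. c i * (g i x * h x)"]) (auto intro!: intg continuous_intros assms)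
  also have "\<dots> = (\<Sum>i\<in>I. c i * ip (g i) h)" unfolding ip_def by simp
  finally show ?thesis .
qed

lemma ip_add_left:
  assumes "continuous_on \<Omega> f" "continuous_on \<Omega> g" "continuous_on \<Omega> h"
  shows "ip (f + g) h = ip f h + ip g h"
proof -
  have "ip (f + g) h = (\<integral>x. f x * h x + g x * h x \<partial>\<mu>)"
    unfolding ip_def by (simp add: distrib_right)
  also have "\<dots> = ip f h + ip g h" unfolding ip_def
    by (rule Bochner_Integration.integral_add) (auto intro!: intg continuous_intros assms)
  finally show ?thesis .
qed

lemma ip_diff_left:
  assumes "continuous_on \<Omega> f" "continuous_on \<Omega> g" "continuous_on \<Omega> h"
  shows "ip (f - g) h = ip f h - ip g h"
proof -
  have "ip (f - g) h = (\<integral>x. f x * h x - g x * h x \<partial>\<mu>)"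
    unfolding ip_def by (simp add: left_diff_distrib)
  also have "\<dots> = ip f h - ip g h" unfolding ip_def
    by (rule Bochner_Integration.integral_diff) (auto intro!: intg continuous_intros assms)
  finally show ?thesis .
qed

lemma ip_scale_left: "ip (fun_scale c f) h = c * ip f h"
  unfolding ip_def by (simp add: mult.assoc)

lemma ip_zero_left: "ip 0 h = 0"
  unfolding ip_def by simp

lemma ip_nonneg: "ip f f \<ge> 0"
  unfolding ip_def by (rule integral_nonneg_AE) auto

lemma Lq2: "Lq_norm \<mu> 2 f = sqrt (ip f f)"
proof -
  have "\<And>x. \<bar>f x\<bar> powr 2 = f x * f x"
  proof -
    fix x show "\<bar>f x\<bar> powr 2 = f x * f x"
    proof (cases "f x = 0")
      case False
      then have "\<bar>f x\<bar> powr 2 = \<bar>f x\<bar> ^ 2" using powr_numeral[of "\<bar>f x\<bar>" "num.Bit0 num.One"] by simp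
      then show ?thesis by (simp add: power2_eq_square)
    qed simp
  qed
  then show ?thesis unfolding Lq_norm_def ip_def
    using powr_half_sqrt[OF ip_nonneg[of f, unfolded ip_def]] by simp
qed

lemma ip_pos: assumes "f \<in> X" "ip f f = 0" shows "f = 0"
proof
  fix x
  have "sup_norm \<Omega> f \<le> Bc * real N powr (k / 2) * Lq_norm \<mu> 2 f" using nik assms(1) by auto
  also have "\<dots> = 0" using Lq2 assms(2) by simp
  finally have s: "sup_norm \<Omega> f \<le> 0" .
  show "f x = 0 x"
  proof (cases "x \<in> \<Omega>")
    case True
    then show ?thesis using supn_ge[OF Xcont[OF assms(1)] True] s by simp
  qed (use Xzero assms in auto)
qed


definition P :: "nat \<Rightarrow> (nat \<Rightarrow> (nat \<Rightarrow> real) \<Rightarrow> real) \<Rightarrow> ((nat \<Rightarrow> real) \<Rightarrow> real) \<Rightarrow> ((nat \<Rightarrow> real) \<Rightarrow> real)" where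
  "P n u f = (\<Sum>i<n. fun_scale (ip f (u i)) (u i))"

definition ON :: "nat \<Rightarrow> (nat \<Rightarrow> (nat \<Rightarrow> real) \<Rightarrow> real) \<Rightarrow> bool" where
  "ON n u \<longleftrightarrow> (\<forall>i<n. u i \<in> X) \<and> (\<forall>i<n. \<forall>j<n. ip (u i) (u j) = (if i = j then 1 else 0))"

lemma P_X: "\<forall>i<n. u i \<in> X \<Longrightarrow> P n u f \<in> X"
  unfolding P_def by (auto intro!: Xsum Xscale)

lemma ip_P: "\<forall>i<n. u i \<in> X \<Longrightarrow> continuous_on \<Omega> h \<Longrightarrow> ip (P n u f) h = (\<Sum>i<n. ip f (u i) * ip (u i) h)"
  unfolding P_def by (rule ip_sum_left) (auto intro: Xcont)

lemma delta_sum: "j < n \<Longrightarrow> (\<Sum>i<n. a i * (if i = j then 1 else 0)) = (a j :: real)" for n j :: nat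
  by (simp add: if_distrib[of "\<lambda>x. _ * x"] sum.delta' cong: if_cong)

lemma ip_P_u: "ON n u \<Longrightarrow> j < n \<Longrightarrow> ip (P n u f) (u j) = ip f (u j)"
  by (subst ip_P) (auto simp: ON_def delta_sum intro: Xcont)

lemma GS:
  assumes "finite S" "S \<subseteq> X"
  shows "\<exists>n u. n \<le> card S \<and> ON n u \<and> (\<forall>s\<in>S. s = P n u s)"
  using assms
proof (induction S rule: finite_induct)
  case empty
  show ?case by (rule exI[of _ 0]) (auto simp: ON_def)
next
  case (insert b S)
  then obtain n u where n: "n \<le> card S" and on: "ON n u" and rep: "\<forall>s\<in>S. s = P n u s" by auto
  have uX: "\<forall>i<n. u i \<in> X" using on ON_def by auto
  have bX: "b \<in> X" using insert by auto
  define v where "v = b - P n u b"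
  have vX: "v \<in> X" unfolding v_def by (intro Xdiff bX P_X uX)
  have orth: "ip v (u j) = 0" if "j < n" for j
    unfolding v_def using that uX
    by (subst ip_diff_left) (auto intro!: Xcont bX P_X simp: ip_P_u[OF on])
  show ?case
  proof (cases "v = 0")
    case True
    then have "b = P n u b" unfolding v_def by simp
    then show ?thesis using n on rep insert by (intro exI[of _ n] exI[of _ u]) auto
  next
    case False
    then have vv: "ip v v > 0" using ip_pos[OF vX] ip_nonneg[of v] by fastforce
    define r where "r = sqrt (ip v v)"
    have r: "r > 0" "r * r = ip v v" unfolding r_def using vv by auto
    define w where "w = fun_scale (1 / r) v"
    have wX: "w \<in> X" unfolding w_def by (rule Xscale[OF vX])
    define u' where "u' = u(n := w)"
    have u'X: "\<forall>i<Suc n. u' i \<in> X" using uX wX unfolding u'_def by auto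
    have ww: "ip w w = 1"
      unfolding w_def using r
      by (subst ip_sym, simp add: ip_scale_left, subst ip_sym, simp add: ip_scale_left field_simps)
    have wu: "ip w (u j) = 0" if "j < n" for j
      unfolding w_def ip_scale_left using orth[OF that] by simp
    have on': "ON (Suc n) u'"
      unfolding ON_def
    proof (intro conjI allI impI u'X[rule_format])
      fix i j assume i: "i < Suc n" and j: "j < Suc n"
      show "ip (u' i) (u' j) = (if i = j then 1 else 0)"
      proof (cases "i = n"; cases "j = n")
        assume "i = n" "j = n" then show ?thesis using ww u'_def by simp
      next
        assume "i = n" "j \<noteq> n" then show ?thesis using wu[of j] j u'_def by simp
      next
        assume "i \<noteq> n" "j = n" then show ?thesis using wu[of i] i u'_def by (simp add: ip_sym)
      next
        assume "i \<noteq> n" "j \<noteq> n" then show ?thesis using on i j u'_def ON_def by simp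
      qed
    qed
    have P': "P (Suc n) u' f = P n u f + fun_scale (ip f w) w" for f
      unfolding P_def u'_def by (simp add: lessThan_Suc add.commute)
    have ipPw: "ip (P n u f) w = 0" for f
      using wu by (subst ip_P[OF uX]) (auto intro: Xcont wX simp: ip_sym)
    have repS: "\<forall>s\<in>S. s = P (Suc n) u' s"
    proof
      fix s assume s: "s \<in> S"
      have "ip s w = 0" using rep s ipPw by metis
      then show "s = P (Suc n) u' s" using rep s by (simp add: P' fun_scale_def zero_fun_def)
    qed
    have "ip b w = ip (v + P n u b) w" unfolding v_def by simp
    also have "\<dots> = ip v w"
      by (subst ip_add_left) (auto intro!: Xcont vX P_X uX wX simp: ipPw)
    also have "\<dots> = ip w v" by (rule ip_sym)
    also have "\<dots> = r" unfolding w_def ip_scale_left using r by (simp add: field_simps)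
    finally have ipb: "ip b w = r" .
    have "fun_scale r w = v" unfolding w_def using r by (auto simp: fun_scale_def fun_eq_iff)
    then have "b = P (Suc n) u' b" unfolding P' ipb v_def by simp
    then show ?thesis using repS on' n insert
      by (intro exI[of _ "Suc n"] exI[of _ u']) auto
  qed
qed


lemma P_app: "P n u f x = (\<Sum>i<n. ip f (u i) * u i x)"
  unfolding P_def by (simp add: sum_fun_app)

lemma mu1: "measure \<mu> \<Omega> = 1"
  using prob_space.prob_space[OF ps] sp by simp

lemma int_const: "(\<integral>x. c \<partial>\<mu>) = (c::real)"
  using mu1 sp by simp

lemma onb:
  assumes "fs.dim X = N" "N \<ge> 1"
  shows "\<exists>n u. n \<le> N \<and> ON n u \<and> (\<forall>f\<in>X. f = P n u f)"
proof -
  obtain Bs where Bs: "Bs \<subseteq> X" "X \<subseteq> fs.span Bs" "card Bs = N"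
    using fs.basis_exists[of X] assms(1) by metis
  have "finite Bs" using Bs(3) assms(2) card.infinite by fastforce
  from GS[OF this Bs(1)] obtain n u where nu: "n \<le> card Bs" "ON n u" "\<forall>s\<in>Bs. s = P n u s" by blast
  have uX: "\<forall>i<n. u i \<in> X" using nu(2) ON_def by auto
  define T where "T = {f\<in>X. f = P n u f}"
  have "Modules.module.subspace fun_scale T"
  proof (rule fs.subspaceI)
    show "0 \<in> T" unfolding T_def
      using fs.subspace_0[OF sub] by (simp add: fun_eq_iff P_app ip_zero_left)
  next
    fix f g assume f: "f \<in> T" and g: "g \<in> T"
    then have fX: "f \<in> X" and gX: "g \<in> X" unfolding T_def by auto
    have "P n u (f + g) x = P n u f x + P n u g x" for x
      unfolding P_app using uX
      by (simp add: ip_add_left Xcont fX gX distrib_right sum.distrib)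
    then have "P n u (f + g) = f + g" using f g unfolding T_def by (auto simp: fun_eq_iff)
    then show "f + g \<in> T" unfolding T_def using Xadd[OF fX gX] by simp
  next
    fix c f assume f: "f \<in> T"
    then have fX: "f \<in> X" unfolding T_def by auto
    have "P n u (fun_scale c f) x = c * P n u f x" for x
      unfolding P_app by (simp add: ip_scale_left sum_distrib_left mult.assoc)
    then have "P n u (fun_scale c f) = fun_scale c f" using f unfolding T_def
      by (auto simp: fun_eq_iff)
    then show "fun_scale c f \<in> T" unfolding T_def using Xscale[OF fX] by simp
  qed
  moreover have "Bs \<subseteq> T" using Bs(1) nu(3) T_def by auto
  ultimately have "fs.span Bs \<subseteq> T" using fs.span_minimal by blast
  then show ?thesis using Bs nu unfolding T_def by (intro exI[of _ n] exI[of _ u]) auto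
qed

lemma meas_bound:
  assumes gX: "g \<in> X" and G0: "sup_norm \<Omega> g > 0" and q: "q \<ge> 2" and t: "t \<ge> 0"
    and tq: "t powr q \<le> Bc powr (-q) * real N powr (-k) / 2"
  shows "measure \<mu> {x\<in>\<Omega>. t * sup_norm \<Omega> g \<le> \<bar>g x\<bar>} \<ge> Bc powr (-q) * real N powr (-k) / 2"
proof -
  define G where "G = sup_norm \<Omega> g"
  define A where "A = {x\<in>\<Omega>. t * G \<le> \<bar>g x\<bar>}"
  define I where "I = (\<integral>x. \<bar>g x\<bar> powr q \<partial>\<mu>)"
  have gm: "g \<in> borel_measurable \<mu>" using meas Xcont gX by blast
  have Am: "A \<in> sets \<mu>" unfolding A_def using gm sp[symmetric] by (simp only:) measurable
  have gle: "\<bar>g x\<bar> \<le> G" if "x \<in> \<Omega>" for x using supn_ge Xcont gX that G_def by blast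
  have Ipos: "I \<ge> 0" unfolding I_def by (rule integral_nonneg_AE) auto
  have Npos: "real N > 0"
  proof (rule ccontr)
    assume "\<not> real N > 0" then have "N = 0" by simp
    then have "sup_norm \<Omega> g \<le> 0" using nik gX by auto
    then show False using G0 by simp
  qed
  have "G \<le> Bc * real N powr (k / q) * Lq_norm \<mu> q g" using nik gX q G_def by auto
  also have "Lq_norm \<mu> q g = I powr (1/q)" unfolding Lq_norm_def I_def ..
  finally have n1: "G \<le> Bc * real N powr (k / q) * I powr (1/q)" .
  have "G powr q \<le> (Bc * real N powr (k / q) * I powr (1/q)) powr q"
    using n1 G0 G_def q by (intro powr_mono2) auto
  also have "\<dots> = Bc powr q * real N powr k * I"
    using Bc Npos Ipos q by (simp add: powr_mult powr_powr)
  finally have low: "G powr q \<le> Bc powr q * real N powr k * I" .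
  have intg_gq: "integrable \<mu> (\<lambda>x. \<bar>g x\<bar> powr q)"
  proof (rule finite_measure.integrable_const_bound[where B="G powr q"])
    show "finite_measure \<mu>" using ps prob_space_def by blast
    show "AE x in \<mu>. norm (\<bar>g x\<bar> powr q) \<le> G powr q"
      using gle sp q by (intro AE_I2) (auto intro!: powr_mono2)
    show "(\<lambda>x. \<bar>g x\<bar> powr q) \<in> borel_measurable \<mu>" using gm by measurable
  qed
  have "I \<le> (\<integral>x. (t * G) powr q + G powr q * indicator A x \<partial>\<mu>)"
    unfolding I_def
  proof (rule integral_mono[OF intg_gq])
    show "integrable \<mu> (\<lambda>x. (t * G) powr q + G powr q * indicator A x)"
      using Am mu1 ps prob_space_def finite_measure.integrable_const
      by (intro Bochner_Integration.integrable_add integrable_mult_right integrable_indicator)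
        (auto simp: prob_space.emeasure_le_1 sp less_top[symmetric] finite_measure.emeasure_finite)
    fix x assume x: "x \<in> space \<mu>"
    show "\<bar>g x\<bar> powr q \<le> (t * G) powr q + G powr q * indicator A x"
    proof (cases "x \<in> A")
      case True
      have "\<bar>g x\<bar> powr q \<le> G powr q" using gle[of x] x sp q by (intro powr_mono2) auto
      moreover have "(t * G) powr q \<ge> 0" by (rule powr_ge_zero)
      ultimately have "\<bar>g x\<bar> powr q \<le> (t * G) powr q + G powr q" by linarith
      then show ?thesis using True by simp
    next
      case False
      then have "\<bar>g x\<bar> < t * G" using x sp A_def by auto
      then show ?thesis using False q by (auto intro!: powr_mono2)
    qed
  qed
  also have "\<dots> = (t * G) powr q + G powr q * measure \<mu> A"
    using Am mu1 ps prob_space_def finite_measure.integrable_const sp int_const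
    by (subst Bochner_Integration.integral_add) (auto intro!: integrable_indicator
        simp: prob_space.emeasure_le_1 less_top[symmetric] finite_measure.emeasure_finite)
  finally have up: "I \<le> t powr q * G powr q + G powr q * measure \<mu> A"
    using t G0 G_def by (simp add: powr_mult)
  have Gq: "G powr q > 0" using G0 G_def by simp
  have "G powr q * (Bc powr (-q) * real N powr (-k)) \<le> I"
  proof -
    have "G powr q * (Bc powr (-q) * real N powr (-k)) = G powr q / (Bc powr q * real N powr k)"
      using Bc Npos by (simp add: powr_minus field_simps)
    also have "\<dots> \<le> I" using low Bc Npos by (simp add: divide_le_eq mult.commute)
    finally show ?thesis .
  qed
  with up have "G powr q * (Bc powr (-q) * real N powr (-k)) \<le> G powr q * (t powr q + measure \<mu> A)"
    by (simp add: algebra_simps)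
  then have "Bc powr (-q) * real N powr (-k) \<le> t powr q + measure \<mu> A"
    using Gq by (simp add: mult_le_cancel_left)
  then show ?thesis using tq unfolding A_def G_def by linarith
qed


end

lemma hitting:
  fixes M :: "'a measure" and A :: "'b \<Rightarrow> 'a set"
  assumes ps: "prob_space M" and fin: "finite F" and AF: "\<forall>a\<in>F. A a \<in> sets M \<and> measure M (A a) \<ge> p"
    and p: "0 \<le> p" "p \<le> 1" and cnt: "real (card F) * (1 - p) ^ m < 1"
  shows "\<exists>\<xi>. (\<forall>j\<in>{1..m}. \<xi> j \<in> space M) \<and> (\<forall>a\<in>F. \<exists>j\<in>{1..m}. \<xi> j \<in> A a)"
  using fin AF cnt
proof (induction m arbitrary: F)
  case 0
  then have "F = {}" by simp
  then show ?case by auto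
next
  case (Suc m)
  have ne: "space M \<noteq> {}" using ps prob_space.not_empty by blast
  show ?case
  proof (cases "F = {}")
    case True
    then obtain x where "x \<in> space M" using ne by blast
    then show ?thesis using True by (intro exI[of _ "\<lambda>_. x"]) auto
  next
    case False
    define h where "h x = (\<Sum>a\<in>F. indicator (A a) x :: real)" for x
    have hc: "h x = real (card {a\<in>F. x \<in> A a})" for x
      unfolding h_def using Suc.prems(1) by (simp add: sum.inter_filter indicator_def) (simp add: Int_def)
    have "h ` space M \<subseteq> real ` {0..card F}"
      using hc Suc.prems(1) by (auto intro!: imageI card_mono)
    then have finh: "finite (h ` space M)" using finite_subset by blast
    obtain x0 where x0: "x0 \<in> space M" "h x0 = Max (h ` space M)"
      using Max_in[OF finh] ne by (metis (no_types, lifting) empty_is_image imageE)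
    have hmax: "h x \<le> h x0" if "x \<in> space M" for x using x0 finh that by simp
    have fm: "finite_measure M" using ps prob_space_def by blast
    have "(\<integral>x. h x \<partial>M) = (\<Sum>a\<in>F. measure M (A a))"
      unfolding h_def using Suc.prems(2) fm
      by (subst Bochner_Integration.integral_sum)
        (auto intro!: integrable_indicator simp: finite_measure.emeasure_finite less_top[symmetric]
          sets.Int_space_eq2)
    also have "\<dots> \<ge> real (card F) * p" using Suc.prems(2) sum_mono[of F "\<lambda>_. p" "\<lambda>a. measure M (A a)"] by simp
    finally have "real (card F) * p \<le> (\<integral>x. h x \<partial>M)" .
    also have "\<dots> \<le> (\<integral>x. h x0 \<partial>M)"
      using fm hmax Suc.prems(2) unfolding h_def
      by (intro integral_mono) (auto intro!: integrable_indicator finite_measure.integrable_const[OF fm] simp: finite_measure.emeasure_finite less_top[symmetric])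
    also have "\<dots> = h x0" using prob_space.prob_space[OF ps] by simp
    finally have hx0: "real (card F) * p \<le> h x0" .
    define F' where "F' = {a\<in>F. x0 \<notin> A a}"
    have "F = {a\<in>F. x0 \<in> A a} \<union> F'" unfolding F'_def by auto
    then have "card F = card {a\<in>F. x0 \<in> A a} + card F'"
      using Suc.prems(1) card_Un_disjoint[of "{a\<in>F. x0 \<in> A a}" F'] unfolding F'_def by auto
    then have cF': "real (card F') \<le> (1 - p) * real (card F)" using hx0 hc[of x0] by (simp add: algebra_simps)
    have "real (card F') * (1 - p) ^ m \<le> (1 - p) * real (card F) * (1 - p) ^ m"
      using cF' p by (intro mult_right_mono) auto
    also have "\<dots> < 1" using Suc.prems(3) by (simp add: algebra_simps)
    finally have "real (card F') * (1 - p) ^ m < 1" .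
    then obtain \<xi> where xi: "\<forall>j\<in>{1..m}. \<xi> j \<in> space M" "\<forall>a\<in>F'. \<exists>j\<in>{1..m}. \<xi> j \<in> A a"
      using Suc.IH[of F'] Suc.prems unfolding F'_def by auto
    show ?thesis
    proof (intro exI[of _ "\<xi>(Suc m := x0)"] conjI ballI)
      fix j assume "j \<in> {1..Suc m}" then show "(\<xi>(Suc m := x0)) j \<in> space M" using xi x0 by auto
    next
      fix a assume a: "a \<in> F"
      show "\<exists>j\<in>{1..Suc m}. (\<xi>(Suc m := x0)) j \<in> A a"
      proof (cases "x0 \<in> A a")
        case True then show ?thesis by (intro bexI[of _ "Suc m"]) auto
      next
        case False
        then obtain j where "j \<in> {1..m}" "\<xi> j \<in> A a" using xi a F'_def by auto
        then show ?thesis by (intro bexI[of _ j]) auto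
      qed
    qed
  qed
qed



context setting begin

lemma t_facts: "Bc powr (-(k+1)) > 0" "Bc powr (-(k+1)) \<le> 1"
proof -
  have "Bc powr (k+1) \<ge> 1" using Bc kpos by (intro ge_one_powr_ge_zero) auto
  moreover have e: "Bc powr (-(k+1)) = inverse (Bc powr (k+1))" by (rule powr_minus)
  ultimately show "Bc powr (-(k+1)) > 0" "Bc powr (-(k+1)) \<le> 1" unfolding e using Bc by (auto simp: inverse_le_1_iff)
qed

lemma u_bound: assumes "ON n u" "i < n" "x \<in> \<Omega>" shows "\<bar>u i x\<bar> \<le> Bc * real N powr (k/2)"
proof -
  have uX: "u i \<in> X" and uu: "ip (u i) (u i) = 1" using assms ON_def by auto
  have "\<bar>u i x\<bar> \<le> sup_norm \<Omega> (u i)" using supn_ge[OF Xcont[OF uX] assms(3)] .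
  also have "\<dots> \<le> Bc * real N powr (k / 2) * Lq_norm \<mu> 2 (u i)" using nik uX by auto
  also have "Lq_norm \<mu> 2 (u i) = 1" using Lq2 uu by simp
  finally show ?thesis by simp
qed

lemma coef_bound:
  assumes fX: "f \<in> X" and f1: "sup_norm \<Omega> f = 1" and on: "ON n u" and i: "i < n"
  shows "\<bar>ip f (u i)\<bar> \<le> 1"
proof -
  have uX: "u i \<in> X" and uu: "ip (u i) (u i) = 1" using on i ON_def by auto
  have cf: "continuous_on \<Omega> f" and cu: "continuous_on \<Omega> (u i)" using Xcont fX uX by auto
  have "\<bar>ip f (u i)\<bar> \<le> (\<integral>x. norm (f x * u i x) \<partial>\<mu>)"
    unfolding ip_def using integral_norm_bound[of \<mu> "\<lambda>x. f x * u i x"] by simp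
  also have "\<dots> \<le> (\<integral>x. (1 + u i x * u i x) / 2 \<partial>\<mu>)"
  proof (rule integral_mono)
    show "integrable \<mu> (\<lambda>x. norm (f x * u i x))" using cf cu by (intro intg continuous_intros)
    show "integrable \<mu> (\<lambda>x. (1 + u i x * u i x) / 2)" using cu by (auto intro!: intg continuous_intros)
    fix x assume "x \<in> space \<mu>"
    then have "x \<in> \<Omega>" using sp by simp
    then have "\<bar>f x\<bar> \<le> 1" using supn_ge[OF cf, of x] f1 by simp
    then have "\<bar>f x * u i x\<bar> \<le> \<bar>u i x\<bar>" by (simp add: abs_mult mult_left_le_one_le)
    moreover have "\<bar>u i x\<bar> \<le> (1 + u i x * u i x) / 2"
    proof -
      define w where "w = \<bar>u i x\<bar>"
      define s where "s = u i x * u i x"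
      have "(w - 1) * (w - 1) \<ge> 0" by simp
      moreover have "(w - 1) * (w - 1) = w * w - 2 * w + 1" by (simp add: algebra_simps)
      moreover have "w * w = s" unfolding w_def s_def by (rule abs_mult_self_eq)
      ultimately have "0 \<le> s - 2 * w + 1" by simp
      then have "w \<le> (1 + s) / 2" by (simp add: field_simps)
      then show ?thesis unfolding w_def s_def .
    qed
    ultimately show "norm (f x * u i x) \<le> (1 + u i x * u i x) / 2" by simp
  qed
  also have "\<dots> = ((\<integral>x. 1 \<partial>\<mu>) + ip (u i) (u i)) / 2"
  proof -
    have i1: "integrable \<mu> (\<lambda>x. u i x * u i x)" by (intro intg continuous_intros cu)
    have i0: "integrable \<mu> (\<lambda>x. 1::real)" by (intro intg continuous_intros)
    have "(\<integral>x. (1 + u i x * u i x) / 2 \<partial>\<mu>) = (\<integral>x. 1 + u i x * u i x \<partial>\<mu>) / 2" by simp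
    also have "(\<integral>x. 1 + u i x * u i x \<partial>\<mu>) = (\<integral>x. 1 \<partial>\<mu>) + (\<integral>x. u i x * u i x \<partial>\<mu>)"
      by (rule Bochner_Integration.integral_add[OF i0 i1])
    finally show ?thesis unfolding ip_def .
  qed
  also have "\<dots> = 1" by (simp only: int_const uu) simp
  finally show ?thesis .
qed

lemma main_big:
  assumes N2: "N \<ge> 2" and nN: "n \<le> N" and on: "ON n u" and rep: "\<forall>f\<in>X. f = P n u f"
    and m: "real m \<ge> cst Bc k / (ln Bc)^2 * real N powr (k+2) * (ln (real N))^2"
  shows "\<exists>\<xi>. (\<forall>j\<in>{1..m}. \<xi> j \<in> \<Omega>) \<and>
           (\<forall>f\<in>X. sup_norm \<Omega> f = 1 \<longrightarrow> (\<exists>j\<in>{1..m}. Bc powr (-(k+1)) / 2 \<le> \<bar>f (\<xi> j)\<bar>))"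
proof -
  define t where "t = Bc powr (-(k+1))"
  define \<epsilon> where "\<epsilon> = t / 4"
  define U where "U = Bc * real N powr (k/2)"
  define \<delta> where "\<delta> = (Bc powr (-(k+1)) / 4) / (real N * (Bc * real N powr (k/2)))"
  define q where "q = 2 + ln (real N)/ln Bc + ln 2/(k*ln Bc)"
  define p where "p = Bc powr (-q) * real N powr (-k) / 2"
  define K where "K = \<lceil>1/\<delta>\<rceil>"
  define Z where "Z = PiE {..<n} (\<lambda>_. {-K..K})"
  define gr where "gr z = (\<Sum>i<n. fun_scale (\<delta> * of_int (z i)) (u i))" for z :: "nat \<Rightarrow> int"
  define F where "F = {g \<in> gr ` Z. sup_norm \<Omega> g > 0}"
  define A where "A g = {x\<in>\<Omega>. t * sup_norm \<Omega> g \<le> \<bar>g x\<bar>}" for g :: "(nat \<Rightarrow> real) \<Rightarrow> real"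
  have tp: "t > 0" "t \<le> 1" using t_facts t_def by auto
  have N0: "real N > 0" using N2 by simp
  have Up: "U > 0" unfolding U_def using Bc N0 by simp
  have dpos: "\<delta> > 0" unfolding \<delta>_def using Bc N0 by simp
  have dU: "real N * \<delta> * U = \<epsilon>" unfolding \<delta>_def U_def \<epsilon>_def t_def using N0 Up U_def by (simp add: field_simps)
  have uX: "\<forall>i<n. u i \<in> X" using on ON_def by auto
  have uU: "\<And>i x. i < n \<Longrightarrow> x \<in> \<Omega> \<Longrightarrow> \<bar>u i x\<bar> \<le> U" using u_bound[OF on] U_def by auto
  have grX: "gr z \<in> X" for z unfolding gr_def using uX by (auto intro!: Xsum Xscale)
  have finZ: "finite Z" unfolding Z_def by (auto intro!: finite_PiE)
  have cardZ: "card Z = nat (2*K+1) ^ n" unfolding Z_def by (simp add: card_PiE)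
  have K1: "K \<ge> 1"
  proof -
    have "1/\<delta> > 0" using dpos by simp
    then show ?thesis unfolding K_def by (simp add: le_ceiling_iff)
  qed
  have Kle: "real_of_int K \<le> 1/\<delta> + 1" unfolding K_def by (rule of_int_ceiling_le_add_one)
  have finF: "finite F" unfolding F_def using finZ by auto
  have cardF: "card F \<le> card Z"
  proof -
    have "F \<subseteq> gr ` Z" unfolding F_def by auto
    then have "card F \<le> card (gr ` Z)" using finZ by (intro card_mono) auto
    also have "\<dots> \<le> card Z" by (rule card_image_le[OF finZ])
    finally show ?thesis .
  qed
  have q2: "q \<ge> 2"
  proof -
    have "ln (real N) / ln Bc \<ge> 0" "ln 2 / (k * ln Bc) \<ge> 0" using Bc kpos N2 by auto
    then show ?thesis unfolding q_def by linarith
  qed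
  have tq: "t powr q \<le> Bc powr (-q) * real N powr (-k) / 2"
    unfolding t_def q_def by (rule tq_ok[OF Bc kpos N2])
  have p0: "p \<ge> 0" unfolding p_def by simp
  have p1: "p \<le> 1"
  proof -
    have "Bc powr q \<ge> 1" using Bc q2 by (intro ge_one_powr_ge_zero) auto
    moreover have "Bc powr (-q) = inverse (Bc powr q)" by (rule powr_minus)
    ultimately have "Bc powr (-q) \<le> 1" by (simp add: inverse_le_1_iff)
    moreover have "real N powr k \<ge> 1" using N2 kpos by (intro ge_one_powr_ge_zero) auto
    moreover have "real N powr (-k) = inverse (real N powr k)" by (rule powr_minus)
    ultimately have "Bc powr (-q) \<le> 1" "real N powr (-k) \<le> 1" by (simp_all add: inverse_le_1_iff)
    then show ?thesis unfolding p_def using mult_le_one[of "Bc powr (-q)" "real N powr (-k)"] by simp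
  qed
  have AF: "\<forall>g\<in>F. A g \<in> sets \<mu> \<and> measure \<mu> (A g) \<ge> p"
  proof
    fix g assume g: "g \<in> F"
    then have gX: "g \<in> X" and gp: "sup_norm \<Omega> g > 0" unfolding F_def using grX by auto
    have gm: "g \<in> borel_measurable \<mu>" using meas Xcont gX by blast
    have "A g \<in> sets \<mu>" unfolding A_def using gm sp[symmetric] by (simp only:) measurable
    moreover have "measure \<mu> (A g) \<ge> p"
      unfolding A_def p_def using meas_bound[OF gX gp q2 _ tq] tp by simp
    ultimately show "A g \<in> sets \<mu> \<and> measure \<mu> (A g) \<ge> p" by simp
  qed
  have cnt: "real (card F) * (1 - p) ^ m < 1"
  proof -
    have "real (card F) \<le> real (card Z)" using cardF by simp
    also have "\<dots> = (2 * real_of_int K + 1) ^ n"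
    proof -
      have "real (nat (2*K+1)) = 2 * real_of_int K + 1" using K1 by simp
      then show ?thesis unfolding cardZ of_nat_power by simp
    qed
    also have "\<dots> \<le> (2/\<delta> + 3) ^ n" using Kle K1 by (intro power_mono) (auto simp: field_simps)
    also have "\<dots> \<le> (2/\<delta> + 3) ^ N" using nN dpos by (intro power_increasing) auto
    finally have c1: "real (card F) \<le> (2/\<delta> + 3) ^ N" .
    have "real (card F) * (1 - p) ^ m \<le> (2/\<delta> + 3) ^ N * (1 - p) ^ m"
      using c1 p1 by (intro mult_right_mono) auto
    also have "\<dots> < 1" unfolding \<delta>_def p_def q_def by (rule arith_main[OF Bc kpos N2 m])
    finally show ?thesis .
  qed
  obtain \<xi> where xi: "\<forall>j\<in>{1..m}. \<xi> j \<in> space \<mu>" "\<forall>g\<in>F. \<exists>j\<in>{1..m}. \<xi> j \<in> A g"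
    using hitting[OF ps finF AF p0 p1 cnt] by blast
  show ?thesis
  proof (intro exI[of _ \<xi>] conjI ballI impI)
    fix j assume "j \<in> {1..m}" then show "\<xi> j \<in> \<Omega>" using xi sp by auto
  next
    fix f assume fX: "f \<in> X" and f1: "sup_norm \<Omega> f = 1"
    define a where "a i = ip f (u i)" for i
    have a1: "\<bar>a i\<bar> \<le> 1" if "i < n" for i unfolding a_def using coef_bound[OF fX f1 on that] .
    define z where "z i = (if i < n then \<lfloor>a i / \<delta>\<rfloor> else undefined)" for i
    have zZ: "z \<in> Z" unfolding Z_def
    proof (rule PiE_I)
      fix i assume i: "i \<in> {..<n}"
      have "a i / \<delta> \<ge> - (1/\<delta>)" "a i / \<delta> \<le> 1/\<delta>" using a1[of i] i dpos by (auto simp: divide_simps)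
      moreover have "1/\<delta> \<le> of_int K" unfolding K_def by (rule le_of_int_ceiling)
      ultimately have "of_int (-K) \<le> a i / \<delta>" "a i / \<delta> < of_int K + 1" by auto
      then have "-K \<le> \<lfloor>a i / \<delta>\<rfloor>" "\<lfloor>a i / \<delta>\<rfloor> \<le> K"
        by (simp_all only: le_floor_iff floor_le_iff)
      then show "z i \<in> {-K..K}" using i z_def by auto
    next
      fix i assume "i \<notin> {..<n}" then show "z i = undefined" unfolding z_def by auto
    qed
    have zclose: "\<bar>a i - \<delta> * of_int (z i)\<bar> \<le> \<delta>" if "i < n" for i
    proof -
      have f1: "of_int \<lfloor>a i / \<delta>\<rfloor> \<le> a i / \<delta>" and f2: "a i / \<delta> < of_int \<lfloor>a i / \<delta>\<rfloor> + 1" by linarith+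
      have "\<delta> * of_int \<lfloor>a i / \<delta>\<rfloor> \<le> \<delta> * (a i / \<delta>)"
        by (rule mult_left_mono[OF f1]) (use dpos in simp)
      moreover have "\<delta> * (a i / \<delta>) < \<delta> * (of_int \<lfloor>a i / \<delta>\<rfloor> + 1)"
        by (rule mult_strict_left_mono[OF f2 dpos])
      ultimately have "\<delta> * of_int \<lfloor>a i / \<delta>\<rfloor> \<le> \<delta> * (a i / \<delta>)" "\<delta> * (a i / \<delta>) < \<delta> * (of_int \<lfloor>a i / \<delta>\<rfloor> + 1)"
        by auto
      then have "\<delta> * of_int \<lfloor>a i / \<delta>\<rfloor> \<le> a i" "a i < \<delta> * of_int \<lfloor>a i / \<delta>\<rfloor> + \<delta>"
        using dpos by (simp_all add: distrib_left)
      then show ?thesis using that z_def by auto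
    qed
    define g where "g = gr z"
    have gX: "g \<in> X" unfolding g_def by (rule grX)
    have close: "\<bar>f x - g x\<bar> \<le> \<epsilon>" if x: "x \<in> \<Omega>" for x
    proof -
      have "f = P n u f" using rep fX by blast
      then have "f x = P n u f x" by simp
      then have "f x = (\<Sum>i<n. a i * u i x)" unfolding P_app a_def .
      moreover have "g x = (\<Sum>i<n. \<delta> * of_int (z i) * u i x)" unfolding g_def gr_def by (simp add: sum_fun_app)
      ultimately have "f x - g x = (\<Sum>i<n. (a i - \<delta> * of_int (z i)) * u i x)"
        by (simp add: sum_subtractf left_diff_distrib)
      then have "\<bar>f x - g x\<bar> \<le> (\<Sum>i<n. \<bar>(a i - \<delta> * of_int (z i)) * u i x\<bar>)" by (simp add: sum_abs)
      also have "\<dots> \<le> (\<Sum>i<n. \<delta> * U)"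
      proof (rule sum_mono)
        fix i assume "i \<in> {..<n}"
        then have "\<bar>a i - \<delta> * of_int (z i)\<bar> \<le> \<delta>" "\<bar>u i x\<bar> \<le> U" using zclose uU x by auto
        then show "\<bar>(a i - \<delta> * of_int (z i)) * u i x\<bar> \<le> \<delta> * U"
          unfolding abs_mult using dpos by (intro mult_mono) auto
      qed
      also have "\<dots> = real n * \<delta> * U" by simp
      also have "\<dots> \<le> real N * \<delta> * U" using nN dpos Up by (intro mult_right_mono) auto
      finally show ?thesis using dU by simp
    qed
    obtain x1 where x1: "x1 \<in> \<Omega>" "sup_norm \<Omega> f = \<bar>f x1\<bar>" using supn_attn[OF Xcont[OF fX]] by blast
    have "\<bar>g x1\<bar> \<ge> 1 - \<epsilon>" using close[OF x1(1)] x1 f1 by linarith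
    then have sg: "sup_norm \<Omega> g \<ge> 1 - \<epsilon>" using supn_ge[OF Xcont[OF gX] x1(1)] by linarith
    have e1: "\<epsilon> < 1" unfolding \<epsilon>_def using tp by simp
    have "g \<in> F" unfolding F_def g_def using zZ sg e1 g_def by auto
    then obtain j where j: "j \<in> {1..m}" "\<xi> j \<in> A g" using xi by blast
    then have xj: "\<xi> j \<in> \<Omega>" and gj: "t * sup_norm \<Omega> g \<le> \<bar>g (\<xi> j)\<bar>" unfolding A_def by auto
    have "t * (1 - \<epsilon>) \<le> t * sup_norm \<Omega> g" using sg tp by (intro mult_left_mono) auto
    then have "\<bar>f (\<xi> j)\<bar> \<ge> t * (1 - \<epsilon>) - \<epsilon>" using gj close[OF xj] by linarith
    moreover have "t * (1 - \<epsilon>) - \<epsilon> \<ge> t / 2"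
    proof -
      have "t * t \<le> t * 1" using tp by (intro mult_left_mono) auto
      moreover have "t * (1 - \<epsilon>) = t - (t * t) / 4" unfolding \<epsilon>_def by (simp add: algebra_simps)
      ultimately show ?thesis unfolding \<epsilon>_def by linarith
    qed
    ultimately have "t / 2 \<le> \<bar>f (\<xi> j)\<bar>" by linarith
    then show "\<exists>j\<in>{1..m}. Bc powr (-(k+1)) / 2 \<le> \<bar>f (\<xi> j)\<bar>" using j(1) unfolding t_def by blast
  qed
qed


lemma Bk1: "Bc powr (k+1) * Bc powr (-(k+1)) = 1"
  using Bc by (simp add: powr_add[symmetric])

lemma Bkge: "Bc powr (k+1) \<ge> 1" using Bc kpos by (intro ge_one_powr_ge_zero) auto

lemma Max_pt: "j \<in> {1..m} \<Longrightarrow> \<bar>f (\<xi> j)\<bar> \<le> Max ((\<lambda>j. \<bar>f (\<xi> j)\<bar>) ` {1..m})"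
  for f :: "(nat \<Rightarrow> real) \<Rightarrow> real" and \<xi> :: "nat \<Rightarrow> nat \<Rightarrow> real"
  by (rule Max_ge) auto

lemma Max_nn: "m \<ge> 1 \<Longrightarrow> 0 \<le> Max ((\<lambda>j. \<bar>f (\<xi> j)\<bar>) ` {1..m})"
  for f :: "(nat \<Rightarrow> real) \<Rightarrow> real" and \<xi> :: "nat \<Rightarrow> nat \<Rightarrow> real"
  using Max_pt[of 1 m f \<xi>] by (meson abs_ge_zero atLeastAtMost_iff le_refl order_trans)

lemma final_loc:
  assumes dimN: "fs.dim X = N" and m1: "m \<ge> 1"
    and m: "real m \<ge> cst Bc k / (ln Bc)^2 * real N powr (k+2) * (ln (real N))^2"
  shows "\<exists>\<xi>. (\<forall>j\<in>{1..m}. \<xi> j \<in> \<Omega>) \<and>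
           (\<forall>f\<in>X. sup_norm \<Omega> f \<le> 2 * Bc powr (k+1) * Max ((\<lambda>j. \<bar>f (\<xi> j)\<bar>) ` {1..m}))"
proof -
  have K0: "2 * Bc powr (k+1) \<ge> 1" using Bkge by simp
  obtain x0 where x0: "x0 \<in> \<Omega>" using ne by blast
  consider "N = 0" | "N = 1" | "N \<ge> 2" by linarith
  then show ?thesis
  proof cases
    case 1
    show ?thesis
    proof (intro exI[of _ "\<lambda>_. x0"] conjI ballI)
      fix f assume fX: "f \<in> X"
      have "sup_norm \<Omega> f \<le> Bc * real N powr (k / 2) * Lq_norm \<mu> 2 f" using nik fX by auto
      also have "\<dots> = 0" using 1 by simp
      also have "0 \<le> 2 * Bc powr (k+1) * Max ((\<lambda>j. \<bar>f x0\<bar>) ` {1..m})"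
        using Max_nn[OF m1, of f "\<lambda>_. x0"] by simp
      finally show "sup_norm \<Omega> f \<le> 2 * Bc powr (k+1) * Max ((\<lambda>j. \<bar>f ((\<lambda>_. x0) j)\<bar>) ` {1..m})" by simp
    qed (use x0 in auto)
  next
    case 2
    then obtain n u where nu: "n \<le> 1" "ON n u" "\<forall>f\<in>X. f = P n u f" using onb[OF dimN] by auto
    obtain xs where xs: "xs \<in> \<Omega>" "\<forall>f\<in>X. \<forall>y\<in>\<Omega>. \<bar>f y\<bar> \<le> \<bar>f xs\<bar>"
    proof (cases "n = 0")
      case True
      have "\<forall>f\<in>X. \<forall>y. f y = 0"
      proof (intro ballI allI)
        fix f y assume "f \<in> X"
        then have "f = P n u f" using nu(3) by blast
        then have "f y = P n u f y" by simp
        then show "f y = 0" using True P_app by simp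
      qed
      then have "\<forall>f\<in>X. \<forall>y\<in>\<Omega>. \<bar>f y\<bar> \<le> \<bar>f x0\<bar>" by (metis abs_zero order_refl)
      then show ?thesis using that x0 by blast
    next
      case False
      then have n1: "n = 1" using nu by simp
      then have u0: "u 0 \<in> X" using nu ON_def by auto
      obtain xs where xs: "xs \<in> \<Omega>" "\<forall>y\<in>\<Omega>. \<bar>u 0 y\<bar> \<le> \<bar>u 0 xs\<bar>" using maxpt[OF Xcont[OF u0]] by blast
      have "\<forall>f\<in>X. \<forall>y\<in>\<Omega>. \<bar>f y\<bar> \<le> \<bar>f xs\<bar>"
      proof (intro ballI)
        fix f y assume fX: "f \<in> X" and y: "y \<in> \<Omega>"
        have fe: "f z = ip f (u 0) * u 0 z" for z
        proof -
          have "f = P n u f" using nu(3) fX by blast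
          then have "f z = P n u f z" by simp
          then show ?thesis using n1 P_app by simp
        qed
        have "\<bar>f y\<bar> = \<bar>ip f (u 0)\<bar> * \<bar>u 0 y\<bar>" using fe[of y] by (simp add: abs_mult)
        moreover have "\<bar>f xs\<bar> = \<bar>ip f (u 0)\<bar> * \<bar>u 0 xs\<bar>" using fe[of xs] by (simp add: abs_mult)
        moreover have "\<bar>ip f (u 0)\<bar> * \<bar>u 0 y\<bar> \<le> \<bar>ip f (u 0)\<bar> * \<bar>u 0 xs\<bar>"
          using xs y by (intro mult_left_mono) auto
        ultimately show "\<bar>f y\<bar> \<le> \<bar>f xs\<bar>" by simp
      qed
      then show ?thesis using that xs by blast
    qed
    show ?thesis
    proof (intro exI[of _ "\<lambda>_. xs"] conjI ballI)
      fix f assume fX: "f \<in> X"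
      have "sup_norm \<Omega> f = \<bar>f xs\<bar>" using supn_eq xs fX by blast
      also have "\<dots> \<le> Max ((\<lambda>j. \<bar>f xs\<bar>) ` {1..m})" using Max_pt[of 1 m f "\<lambda>_. xs"] m1 by simp
      also have "\<dots> \<le> 2 * Bc powr (k+1) * Max ((\<lambda>j. \<bar>f xs\<bar>) ` {1..m})"
        using K0 Max_nn[OF m1, of f "\<lambda>_. xs"] by (simp add: mult_le_cancel_right1)
      finally show "sup_norm \<Omega> f \<le> 2 * Bc powr (k+1) * Max ((\<lambda>j. \<bar>f ((\<lambda>_. xs) j)\<bar>) ` {1..m})" by simp
    qed (use xs in auto)
  next
    case 3
    then obtain n u where nu: "n \<le> N" "ON n u" "\<forall>f\<in>X. f = P n u f" using onb[OF dimN] by auto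
    obtain \<xi> where xi: "\<forall>j\<in>{1..m}. \<xi> j \<in> \<Omega>"
      "\<forall>f\<in>X. sup_norm \<Omega> f = 1 \<longrightarrow> (\<exists>j\<in>{1..m}. Bc powr (-(k+1)) / 2 \<le> \<bar>f (\<xi> j)\<bar>)"
      using main_big[OF 3 nu m] by blast
    show ?thesis
    proof (intro exI[of _ \<xi>] conjI ballI)
      fix f assume fX: "f \<in> X"
      define S where "S = sup_norm \<Omega> f"
      have S0: "S \<ge> 0" unfolding S_def using supn_nonneg Xcont fX by blast
      define Mx where "Mx = Max ((\<lambda>j. \<bar>f (\<xi> j)\<bar>) ` {1..m})"
      have Mx0: "Mx \<ge> 0" unfolding Mx_def by (rule Max_nn[OF m1])
      show "sup_norm \<Omega> f \<le> 2 * Bc powr (k+1) * Max ((\<lambda>j. \<bar>f (\<xi> j)\<bar>) ` {1..m})"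
      proof (cases "S = 0")
        case True
        then show ?thesis using Mx0 Bkge unfolding S_def Mx_def by simp
      next
        case False
        then have Sp: "S > 0" using S0 by simp
        define f' where "f' = fun_scale (1/S) f"
        have f'X: "f' \<in> X" unfolding f'_def by (rule Xscale[OF fX])
        obtain x1 where x1: "x1 \<in> \<Omega>" "\<forall>y\<in>\<Omega>. \<bar>f y\<bar> \<le> \<bar>f x1\<bar>" using maxpt[OF Xcont[OF fX]] by blast
        have Sx: "S = \<bar>f x1\<bar>" unfolding S_def using supn_eq x1 by blast
        have "sup_norm \<Omega> f' = \<bar>f' x1\<bar>"
          using x1 Sp by (intro supn_eq) (auto simp: f'_def abs_mult divide_right_mono)
        also have "\<dots> = 1" using Sx Sp by (simp add: f'_def abs_mult)
        finally have "sup_norm \<Omega> f' = 1" .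
        then obtain j where j: "j \<in> {1..m}" "Bc powr (-(k+1)) / 2 \<le> \<bar>f' (\<xi> j)\<bar>" using xi f'X by blast
        then have "Bc powr (-(k+1)) / 2 \<le> \<bar>f (\<xi> j)\<bar> / S" using Sp by (simp add: f'_def abs_mult)
        then have "S * (Bc powr (-(k+1)) / 2) \<le> \<bar>f (\<xi> j)\<bar>" using Sp by (simp add: field_simps)
        then have le: "(2 * Bc powr (k+1)) * (S * (Bc powr (-(k+1)) / 2)) \<le> (2 * Bc powr (k+1)) * \<bar>f (\<xi> j)\<bar>"
          using K0 by (intro mult_left_mono) auto
        have eq: "(2 * Bc powr (k+1)) * (S * (Bc powr (-(k+1)) / 2)) = S"
        proof -
          have "(2 * Bc powr (k+1)) * (S * (Bc powr (-(k+1)) / 2)) = S * (Bc powr (k+1) * Bc powr (-(k+1)))"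
            by (simp add: algebra_simps)
          also have "\<dots> = S" by (simp only: Bk1 mult_1_right)
          finally show ?thesis .
        qed
        have "S \<le> 2 * Bc powr (k+1) * \<bar>f (\<xi> j)\<bar>" using le unfolding eq .
        also have "\<dots> \<le> 2 * Bc powr (k+1) * Mx" unfolding Mx_def using Max_pt[OF j(1)] K0 by (intro mult_left_mono) auto
        finally show ?thesis unfolding S_def Mx_def .
      qed
    qed (use xi in auto)
  qed
qed

end

theorem corollary4p2:
  fixes B k :: real
  assumes "B > 1" and "k > 0"
  shows "\<exists>c>0. \<forall>(d::nat) (\<Omega>::(nat \<Rightarrow> real) set) (\<mu>::(nat \<Rightarrow> real) measure)
            (X::((nat \<Rightarrow> real) \<Rightarrow> real) set) (N::nat).
     \<Omega> \<subseteq> Rd d \<and> compact \<Omega> \<and>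
     prob_space \<mu> \<and> space \<mu> = \<Omega> \<and> sets \<mu> = sets (restrict_space borel \<Omega>) \<and>
     X \<subseteq> {f. continuous_on \<Omega> f \<and> (\<forall>x. x \<notin> \<Omega> \<longrightarrow> f x = 0)} \<and>
     Modules.module.subspace fun_scale X \<and>
     Vector_Spaces.vector_space.dim fun_scale X = N \<and>
     (\<forall>q\<ge>2. \<forall>f\<in>X. sup_norm \<Omega> f \<le> B * real N powr (k / q) * Lq_norm \<mu> q f)
     \<longrightarrow>
     (\<forall>m::nat. m \<ge> 1 \<and> real m \<ge> c / (ln B)\<^sup>2 * real N powr (k + 2) * (ln (real N))\<^sup>2 \<longrightarrow>
        (\<exists>\<xi>::nat \<Rightarrow> (nat \<Rightarrow> real). (\<forall>j\<in>{1..m}. \<xi> j \<in> \<Omega>) \<and>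
           (\<forall>f\<in>X. sup_norm \<Omega> f \<le> 2 * B powr (k + 1) * Max ((\<lambda>j. \<bar>f (\<xi> j)\<bar>) ` {1..m}))))"
proof (intro exI[of _ "cst B k"] conjI allI impI)
  show "cst B k > 0" using cst_pos assms by blast
next
  fix d :: nat and \<Omega> :: "(nat \<Rightarrow> real) set" and \<mu> :: "(nat \<Rightarrow> real) measure"
    and X :: "((nat \<Rightarrow> real) \<Rightarrow> real) set" and N :: nat and m :: nat
  assume H: "\<Omega> \<subseteq> Rd d \<and> compact \<Omega> \<and>
     prob_space \<mu> \<and> space \<mu> = \<Omega> \<and> sets \<mu> = sets (restrict_space borel \<Omega>) \<and>
     X \<subseteq> {f. continuous_on \<Omega> f \<and> (\<forall>x. x \<notin> \<Omega> \<longrightarrow> f x = 0)} \<and>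
     Modules.module.subspace fun_scale X \<and>
     Vector_Spaces.vector_space.dim fun_scale X = N \<and>
     (\<forall>q\<ge>2. \<forall>f\<in>X. sup_norm \<Omega> f \<le> B * real N powr (k / q) * Lq_norm \<mu> q f)"
    and M: "m \<ge> 1 \<and> real m \<ge> cst B k / (ln B)\<^sup>2 * real N powr (k + 2) * (ln (real N))\<^sup>2"
  from H have H1: "compact \<Omega>" "prob_space \<mu>" "space \<mu> = \<Omega>" "sets \<mu> = sets (restrict_space borel \<Omega>)"
     "X \<subseteq> {f. continuous_on \<Omega> f \<and> (\<forall>x. x \<notin> \<Omega> \<longrightarrow> f x = 0)}"
     "Modules.module.subspace fun_scale X"
     "Vector_Spaces.vector_space.dim fun_scale X = N"
     "\<forall>q\<ge>2. \<forall>f\<in>X. sup_norm \<Omega> f \<le> B * real N powr (k / q) * Lq_norm \<mu> q f"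
    by blast+
  from M have M1: "m \<ge> 1" and M2: "real m \<ge> cst B k / (ln B)\<^sup>2 * real N powr (k + 2) * (ln (real N))\<^sup>2"
    by blast+
  interpret S: setting \<Omega> \<mu> X N B k
    by (rule setting.intro[OF H1(1-6) assms H1(8)])
  show "\<exists>\<xi>::nat \<Rightarrow> (nat \<Rightarrow> real). (\<forall>j\<in>{1..m}. \<xi> j \<in> \<Omega>) \<and>
           (\<forall>f\<in>X. sup_norm \<Omega> f \<le> 2 * B powr (k + 1) * Max ((\<lambda>j. \<bar>f (\<xi> j)\<bar>) ` {1..m}))"
    by (rule S.final_loc[OF H1(7) M1 M2])
qed

end
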